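(* Let $H=\Bbbk^G\#\Bbbk F$ be as in the context with $G$ abelian, and assume the action of $F$ on $G$ is trivial: $g\triangleleft f=g$ for all $g\in G$, $f\in F$. Fix $f\in F$, let $V=\Bbbk v$ be a simple right $\Bbbk^{G_f}$-comodule with $\rho(v)=v\otimes\sum_{g\in G_f}a^gp_g$, and $\tilde V=(V\otimes\Bbbk f)\Box_{H'_f}H$ the induced right $H$-comodule. Let $V^*=\Bbbk v^*$ be the dual right $\Bbbk^{G_f}$-comodule, $\rho(v^* )=v^*\otimes\sum_{g\in G_f}a^gp_{g^{-1}}$. Then $G_{f^{-1}}=G_f$ and $\tilde V^*\cong(V^*\otimes\Bbbk f^{-1})\Box_{H'_{f^{-1}}}H$. Moreover, $\tilde V\cong\tilde V^*$ if and only if $V\cong V^*$ and $G_{f,f^{-1}}=\{g\in G\mid g\triangleright f=f^{-1}\}\neq\emptyset$.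
   Context: Setting: $\Bbbk$ algebraically closed of characteristic $0$, $F$ a group (possibly infinite), $G$ a finite abelian group, $(F,G,\triangleleft,\triangleright)$ a matched pair ($\triangleright:G\times F\to F$ a left action of $G$ on the set $F$, $\triangleleft:G\times F\to G$ a right action of $F$ on the set $G$, with $g\triangleright(ff')=(g\triangleright f)((g\triangleleft f)\triangleright f')$ and $(gg')\triangleleft f=(g\triangleleft(g'\triangleright f))(g'\triangleleft f)$). $H=\Bbbk^G\#\Bbbk F$ is the Hopf algebra with basis $\{p_g\#f\}$, product $(p_g\#f)(p_{g'}\#f')=\delta_{g\triangleleft f,g'}p_g\#ff'$, unit $\sum_gp_g\#1_F$, coproduct $\Delta(p_g\#f)=\sum_{x\in G}p_{gx^{-1}}\#(x\triangleright f)\otimes p_x\#f$, counit $\varepsilon(p_g\#f)=\delta_{g,1_G}$, antipode $S(p_g\#f)=p_{(g\triangleleft f)^{-1}}\#(g\triangleright f)^{-1}$. For $e\in F$: $G_e=\{g\in G\mid g\triangleright e=e\}$; $H'_e$ is the coalgebra with basis $\{p_g\#f'\mid g\in G_e,f'\in F\}$, $\Delta(p_g\#f')=\sum_{x\in G_e}p_{gx^{-1}}\#(x\triangleright f')\otimes p_x\#f'$, $\varepsilon(p_g\#f')=\delta_{g,1_G}$; $H$ is a left $H'_e$-comodule via $(\pi_e\otimes\mathrm{id})\Delta$ ($\pi_e$ kills $p_g\#f'$, $g\notin G_e$). For a right $\Bbbk^{G_e}$-comodule $U$ with $\rho(u)=\sum_{g\in G_e}u_g\otimes p_g$, $U\otimes\Bbbk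 e$ is a right $H'_e$-comodule via $u\otimes e\mapsto\sum_gu_g\otimes e\otimes p_g\#e$, and $(U\otimes\Bbbk e)\Box_{H'_e}H$ (cotensor product) is the induced right $H$-comodule with coaction $\mathrm{id}\otimes\Delta$. $\tilde V^*$ is the dual right $H$-comodule. *)

theory Defs
  imports "HOL-Computational_Algebra.Polynomial"
begin

text \<open>Groups are written additively: G is a type 'g of class
  ab_group_add (and finite), F is a type 'f of class group_add (possibly
  non-commutative, possibly infinite).  So gg' is g + g', g^{-1} is -g, 1 is 0.
  lt g f is g |> f (left action of G on F), rt g f is g <| f (right action of F on G).
  Vector spaces are subspaces of function spaces 'x => 'k with pointwise operations.
  The basis element p_g # f of H is indexed by the pair (g,f).\<close>

definition matched_pair :: "('g::group_add \<Rightarrow> 'f::group_add \<Rightarrow> 'f) \<Rightarrow> ('g \<Rightarrow> 'f \<Rightarrow> 'g) \<Rightarrow> bool" where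
  "matched_pair lt rt \<longleftrightarrow>
     (\<forall>f. lt 0 f = f) \<and> (\<forall>g g' f. lt (g + g') f = lt g (lt g' f)) \<and>
     (\<forall>g. rt g 0 = g) \<and> (\<forall>g f f'. rt g (f + f') = rt (rt g f) f') \<and>
     (\<forall>g f f'. lt g (f + f') = lt g f + lt (rt g f) f') \<and>
     (\<forall>g g' f. rt (g + g') f = rt g (lt g' f) + rt g' f)"

definition stab :: "('g \<Rightarrow> 'f \<Rightarrow> 'f) \<Rightarrow> 'f \<Rightarrow> 'g set" where
  "stab lt e = {g. lt g e = e}"

definition vzero :: "'x \<Rightarrow> 'k::field" where "vzero = (\<lambda>_. 0)"
definition vadd :: "('x \<Rightarrow> 'k::field) \<Rightarrow> ('x \<Rightarrow> 'k) \<Rightarrow> ('x \<Rightarrow> 'k)" where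
  "vadd u v = (\<lambda>x. u x + v x)"
definition vsc :: "'k::field \<Rightarrow> ('x \<Rightarrow> 'k) \<Rightarrow> ('x \<Rightarrow> 'k)" where
  "vsc c v = (\<lambda>x. c * v x)"

definition linear_on :: "('x \<Rightarrow> 'k::field) set \<Rightarrow> (('x \<Rightarrow> 'k) \<Rightarrow> ('y \<Rightarrow> 'k)) \<Rightarrow> bool" where
  "linear_on M T \<longleftrightarrow> (\<forall>u\<in>M. \<forall>v\<in>M. T (vadd u v) = vadd (T u) (T v)) \<and>
                      (\<forall>c. \<forall>u\<in>M. T (vsc c u) = vsc c (T u))"

definition functional_on :: "('x \<Rightarrow> 'k::field) set \<Rightarrow> (('x \<Rightarrow> 'k) \<Rightarrow> 'k) \<Rightarrow> bool" where
  "functional_on M \<phi> \<longleftrightarrow> (\<forall>u\<in>M. \<forall>v\<in>M. \<phi> (vadd u v) = \<phi> u + \<phi> v) \<and>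
                          (\<forall>c. \<forall>u\<in>M. \<phi> (vsc c u) = c * \<phi> u)"

definition dual_space :: "('x \<Rightarrow> 'k::field) set \<Rightarrow> (('x \<Rightarrow> 'k) \<Rightarrow> 'k) set" where
  "dual_space M = {\<phi>. functional_on M \<phi> \<and> (\<forall>m. m \<notin> M \<longrightarrow> \<phi> m = 0)}"

text \<open>A right comodule over a coalgebra with basis indexed by 'b is given by a space M
  and a coaction c, where c m b is the component of rho(m) at the basis element b,
  i.e. rho(m) = sum_b c m b (x) b.\<close>
definition comod_iso ::
  "('x \<Rightarrow> 'k::field) set \<Rightarrow> (('x \<Rightarrow> 'k) \<Rightarrow> 'b \<Rightarrow> ('x \<Rightarrow> 'k)) \<Rightarrow>
   ('y \<Rightarrow> 'k) set \<Rightarrow> (('y \<Rightarrow> 'k) \<Rightarrow> 'b \<Rightarrow> ('y \<Rightarrow> 'k)) \<Rightarrow> bool" where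
  "comod_iso M c N d \<longleftrightarrow>
     (\<exists>T. linear_on M T \<and> bij_betw T M N \<and> (\<forall>m\<in>M. \<forall>b. d (T m) b = T (c m b)))"

text \<open>Right comodules over the function algebra k^K (basis p_g, g in K, K a subgroup of G):
  Delta(p_g) = sum_{x in K} p_{g x^{-1}} (x) p_x, eps(p_g) = delta_{g,1}.\<close>
definition is_kK_comod :: "'g::ab_group_add set \<Rightarrow> ('x \<Rightarrow> 'k::field) set \<Rightarrow> (('x \<Rightarrow> 'k) \<Rightarrow> 'g \<Rightarrow> ('x \<Rightarrow> 'k)) \<Rightarrow> bool" where
  "is_kK_comod K M \<rho> \<longleftrightarrow>
     vzero \<in> M \<and> (\<forall>u\<in>M. \<forall>v\<in>M. vadd u v \<in> M) \<and> (\<forall>c. \<forall>u\<in>M. vsc c u \<in> M) \<and>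
     (\<forall>m\<in>M. \<forall>g. \<rho> m g \<in> M) \<and> (\<forall>m\<in>M. \<forall>g. g \<notin> K \<longrightarrow> \<rho> m g = vzero) \<and>
     (\<forall>g. linear_on M (\<lambda>m. \<rho> m g)) \<and>
     (\<forall>m\<in>M. \<forall>h\<in>K. \<forall>x\<in>K. \<rho> (\<rho> m x) h = \<rho> m (h + x)) \<and>
     (\<forall>m\<in>M. \<rho> m 0 = m)"

text \<open>One-dimensional k^K-comodule kv (represented as unit => k) with
  rho(v) = v (x) sum_{g in K} a^g p_g.\<close>
definition char_coact :: "'g set \<Rightarrow> ('g \<Rightarrow> 'k::field) \<Rightarrow> (unit \<Rightarrow> 'k) \<Rightarrow> 'g \<Rightarrow> (unit \<Rightarrow> 'k)" where
  "char_coact K a v g = (if g \<in> K then vsc (a g) v else vzero)"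

text \<open>Coefficient of p_{g1}#f1 (x) p_{g2}#f2 in Delta(p_g#f) = sum_x p_{g x^{-1}}#(x |> f) (x) p_x#f.\<close>
definition Delta_coef :: "('g::ab_group_add \<Rightarrow> 'f \<Rightarrow> 'f) \<Rightarrow> 'g \<times> 'f \<Rightarrow> ('g \<times> 'f) \<times> ('g \<times> 'f) \<Rightarrow> 'k::field" where
  "Delta_coef lt b bb = (case b of (g, f) \<Rightarrow> case bb of ((g1, f1), (g2, f2)) \<Rightarrow>
      if g1 = g - g2 \<and> f1 = lt g2 f \<and> f2 = f then 1 else 0)"

text \<open>Coefficient of p_{g1}#f1 (x) p_{g2}#f2 in the left H'_e-coaction (pi_e (x) id) Delta(p_g#f).\<close>
definition lam_coef :: "('g::ab_group_add \<Rightarrow> 'f \<Rightarrow> 'f) \<Rightarrow> 'f \<Rightarrow> 'g \<times> 'f \<Rightarrow> ('g \<times> 'f) \<times> ('g \<times> 'f) \<Rightarrow> 'k::field" where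
  "lam_coef lt e b bb = (if fst (fst bb) \<in> stab lt e then Delta_coef lt b bb else 0)"

text \<open>S(p_g#f) = p_{(g <| f)^{-1}} # (g |> f)^{-1}: index map on the basis.\<close>
definition antipode_idx :: "('g::group_add \<Rightarrow> 'f::group_add \<Rightarrow> 'f) \<Rightarrow> ('g \<Rightarrow> 'f \<Rightarrow> 'g) \<Rightarrow> 'g \<times> 'f \<Rightarrow> 'g \<times> 'f" where
  "antipode_idx lt rt b = (case b of (g, f) \<Rightarrow> (- rt g f, - lt g f))"

text \<open>Dual right H-comodule: rho(phi) = sum_b' phi_b' (x) b' where
  sum_b' phi_b'(m) b' = sum_b phi(m_b) S(b).\<close>
definition dual_coact ::
  "('g::group_add \<Rightarrow> 'f::group_add \<Rightarrow> 'f) \<Rightarrow> ('g \<Rightarrow> 'f \<Rightarrow> 'g) \<Rightarrow> ('x \<Rightarrow> 'k::field) set \<Rightarrow>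
   (('x \<Rightarrow> 'k) \<Rightarrow> 'g \<times> 'f \<Rightarrow> ('x \<Rightarrow> 'k)) \<Rightarrow>
   (('x \<Rightarrow> 'k) \<Rightarrow> 'k) \<Rightarrow> 'g \<times> 'f \<Rightarrow> (('x \<Rightarrow> 'k) \<Rightarrow> 'k)" where
  "dual_coact lt rt M c \<phi> b' =
     (\<lambda>m. if m \<in> M then (\<Sum>b | antipode_idx lt rt b = b' \<and> c m b \<noteq> vzero. \<phi> (c m b)) else 0)"

text \<open>U = kv with rho(v) = v (x) sum_{g in G_e} a^g p_g.  An element of (U (x) ke) (x) H is
  sum_{(g,f)} X(g,f) v (x) e (x) p_g#f, represented by the finitely supported X.
  Elements of (U (x) ke) (x) H'_e (x) H are represented by their coefficient at
  v (x) e (x) p_h#b (x) p_y#f'.  The cotensor product is the equaliser of rho (x) id and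
  id (x) lambda.\<close>

definition rho_id_coef :: "('g \<Rightarrow> 'f \<Rightarrow> 'f) \<Rightarrow> 'f \<Rightarrow> ('g \<Rightarrow> 'k::field) \<Rightarrow> ('g \<times> 'f \<Rightarrow> 'k) \<Rightarrow> ('g \<times> 'f) \<times> ('g \<times> 'f) \<Rightarrow> 'k" where
  "rho_id_coef lt e a X bb = (case bb of ((h, b), (y, f')) \<Rightarrow>
      if h \<in> stab lt e \<and> b = e then a h * X (y, f') else 0)"

definition id_lam_coef :: "('g::ab_group_add \<Rightarrow> 'f \<Rightarrow> 'f) \<Rightarrow> 'f \<Rightarrow> ('g \<times> 'f \<Rightarrow> 'k::field) \<Rightarrow> ('g \<times> 'f) \<times> ('g \<times> 'f) \<Rightarrow> 'k" where
  "id_lam_coef lt e X bb = (\<Sum>b | X b \<noteq> 0. X b * lam_coef lt e b bb)"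

definition induced :: "('g::ab_group_add \<Rightarrow> 'f \<Rightarrow> 'f) \<Rightarrow> 'f \<Rightarrow> ('g \<Rightarrow> 'k::field) \<Rightarrow> ('g \<times> 'f \<Rightarrow> 'k) set" where
  "induced lt e a = {X. finite {b. X b \<noteq> 0} \<and> rho_id_coef lt e a X = id_lam_coef lt e X}"

text \<open>Coaction id (x) Delta on the induced comodule: component at the basis element b2.\<close>
definition ind_coact :: "('g::ab_group_add \<Rightarrow> 'f \<Rightarrow> 'f) \<Rightarrow> ('g \<times> 'f \<Rightarrow> 'k::field) \<Rightarrow> 'g \<times> 'f \<Rightarrow> ('g \<times> 'f \<Rightarrow> 'k)" where
  "ind_coact lt X b2 = (\<lambda>b1. \<Sum>b | X b \<noteq> 0. X b * Delta_coef lt b (b1, b2))"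

end

theory Submission
  imports Defs
begin
locale mpt =
  fixes lt :: "'g::{ab_group_add,finite} \<Rightarrow> 'f::group_add \<Rightarrow> 'f"
  assumes lt0: "lt 0 x = x" and ltadd: "lt (g + h) x = lt g (lt h x)"
    and lthom: "lt g (x + y) = lt g x + lt g y"
begin

lemma lt_comb[simp]: "lt g (lt h x) = lt (g + h) x" by (simp add: ltadd)
lemma lt0s[simp]: "lt 0 x = x" by (rule lt0)
lemma lt_zero[simp]: "lt g 0 = 0"
proof -
  have "lt g 0 + lt g 0 = lt g 0 + 0" using lthom[of g 0 0] by simp
  thus ?thesis by (rule add_left_imp_eq)
qed
lemma lt_neg[simp]: "lt g (- x) = - lt g x"
proof -
  have "lt g (- x) + lt g x = 0" using lthom[of g "-x" x, symmetric] by simp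
  thus ?thesis by (simp add: eq_neg_iff_add_eq_0)
qed
lemma lt_eq_iff: "lt g x = y \<longleftrightarrow> x = lt (- g) y"
proof
  assume "lt g x = y"
  hence "lt (- g) y = lt (- g) (lt g x)" by simp
  also have "\<dots> = x" by simp
  finally show "x = lt (- g) y" by simp
next
  assume "x = lt (- g) y"
  thus "lt g x = y" by simp
qed
lemma lt_inj[simp]: "lt g x = lt g y \<longleftrightarrow> x = y"
  by (simp add: lt_eq_iff)

lemma stab_0[simp]: "0 \<in> stab lt e" by (simp add: stab_def)
lemma stab_add: "h \<in> stab lt e \<Longrightarrow> x \<in> stab lt e \<Longrightarrow> h + x \<in> stab lt e"
  by (simp add: stab_def flip: lt_comb)
lemma stab_neg: "h \<in> stab lt e \<Longrightarrow> - h \<in> stab lt e"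
proof -
  assume "h \<in> stab lt e"
  hence "lt h e = e" by (simp add: stab_def)
  hence "lt (- h) e = lt (- h) (lt h e)" by simp
  also have "\<dots> = e" by simp
  finally show ?thesis by (simp add: stab_def)
qed
lemma stab_neg_iff[simp]: "- h \<in> stab lt e \<longleftrightarrow> h \<in> stab lt e"
  using stab_neg by force
lemma stab_diff: "h \<in> stab lt e \<Longrightarrow> x \<in> stab lt e \<Longrightarrow> h - x \<in> stab lt e"
  using stab_add stab_neg by (metis diff_conv_add_uminus)
lemma stab_negf[simp]: "stab lt (- e) = stab lt e"
  by (auto simp: stab_def)
lemma stab_lt: "stab lt (lt g e) = stab lt e"
proof -
  have "lt h (lt g e) = lt g e \<longleftrightarrow> lt h e = e" for h
    by (metis add.commute lt_comb lt_inj)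
  thus ?thesis by (auto simp: stab_def)
qed
lemma stab_move: "h \<in> stab lt e \<Longrightarrow> lt (g + h) e = lt g e"
  by (simp add: stab_def flip: lt_comb)

definition chr :: "'f \<Rightarrow> ('g \<Rightarrow> 'k::field) \<Rightarrow> bool" where
  "chr e b \<longleftrightarrow> b 0 = 1 \<and> (\<forall>h\<in>stab lt e. \<forall>x\<in>stab lt e. b (h + x) = b h * b x)"

definition indc :: "'f \<Rightarrow> ('g \<Rightarrow> 'k::field) \<Rightarrow> ('g \<times> 'f \<Rightarrow> 'k) \<Rightarrow> bool" where
  "indc e b X \<longleftrightarrow> (\<forall>y f'. X (y, f') \<noteq> 0 \<longrightarrow> lt y f' = e) \<and>
     (\<forall>h\<in>stab lt e. \<forall>y f'. X (h + y, f') = b h * X (y, f'))"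

lemma indc_finite: assumes "indc e b X" shows "finite {p. X p \<noteq> 0}"
proof -
  have "{p. X p \<noteq> 0} \<subseteq> range (\<lambda>y. (y, lt (- y) e))"
  proof
    fix p assume "p \<in> {p. X p \<noteq> 0}"
    then obtain y f' where p: "p = (y, f')" "X (y, f') \<noteq> 0" by (cases p) auto
    hence "lt y f' = e" using assms by (auto simp: indc_def)
    hence "f' = lt (- y) e" by (simp add: lt_eq_iff)
    thus "p \<in> range (\<lambda>y. (y, lt (- y) e))" using p by auto
  qed
  thus ?thesis by (rule finite_subset) auto
qed

lemma id_lam_formula:
  assumes "finite {b. X b \<noteq> 0}"
  shows "id_lam_coef lt e X ((h, bb), (y, f')) =
     (if h \<in> stab lt e \<and> bb = lt y f' then X (h + y, f') else 0)"
proof -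
  have "id_lam_coef lt e X ((h, bb), (y, f')) =
     (\<Sum>b\<in>{b. X b \<noteq> 0}. if b = (h + y, f') then (if h \<in> stab lt e \<and> bb = lt y f' then X (h + y, f') else 0) else 0)"
    unfolding id_lam_coef_def
    by (rule sum.cong) (auto simp: lam_coef_def Delta_coef_def eq_diff_eq split: if_splits)
  also have "\<dots> = (if h \<in> stab lt e \<and> bb = lt y f' then X (h + y, f') else 0)"
    using assms by (subst sum.delta) auto
  finally show ?thesis .
qed

lemma ind_coact_formula:
  assumes "finite {b. X b \<noteq> 0}"
  shows "ind_coact lt X (g2, f2) = (\<lambda>(g1, f1). if f1 = lt g2 f2 then X (g1 + g2, f2) else 0)"
proof (rule ext, clarify)
  fix g1 f1
  have "ind_coact lt X (g2, f2) (g1, f1) =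
     (\<Sum>b\<in>{b. X b \<noteq> 0}. if b = (g1 + g2, f2) then (if f1 = lt g2 f2 then X (g1 + g2, f2) else 0) else 0)"
    unfolding ind_coact_def
    by (rule sum.cong) (auto simp: Delta_coef_def eq_diff_eq split: if_splits)
  also have "\<dots> = (if f1 = lt g2 f2 then X (g1 + g2, f2) else 0)"
    using assms by (subst sum.delta) auto
  finally show "ind_coact lt X (g2, f2) (g1, f1) = (if f1 = lt g2 f2 then X (g1 + g2, f2) else 0)" .
qed

lemma induced_iff:
  assumes b0: "b 0 = 1"
  shows "X \<in> induced lt e b \<longleftrightarrow> indc e b X"
proof
  assume X: "X \<in> induced lt e b"
  hence fin: "finite {b. X b \<noteq> 0}" and eq: "\<And>q. rho_id_coef lt e b X q = id_lam_coef lt e X q"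
    by (auto simp: induced_def)
  have supp: "lt y f' = e" if "X (y, f') \<noteq> 0" for y f'
  proof -
    have "rho_id_coef lt e b X ((0, e), (y, f')) = X (y, f')"
      by (simp add: rho_id_coef_def b0)
    moreover have "id_lam_coef lt e X ((0, e), (y, f')) = (if e = lt y f' then X (y, f') else 0)"
      by (simp add: id_lam_formula[OF fin])
    ultimately show ?thesis using eq[of "((0, e), (y, f'))"] that by (metis (full_types))
  qed
  have rel: "X (h + y, f') = b h * X (y, f')" if h: "h \<in> stab lt e" for h y f'
  proof (cases "lt y f' = e")
    case True
    have "rho_id_coef lt e b X ((h, e), (y, f')) = b h * X (y, f')"
      using h by (simp add: rho_id_coef_def)
    moreover have "id_lam_coef lt e X ((h, e), (y, f')) = X (h + y, f')"
      using h True by (simp add: id_lam_formula[OF fin])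
    ultimately show ?thesis using eq[of "((h, e), (y, f'))"] by simp
  next
    case False
    hence "X (y, f') = 0" using supp by blast
    moreover have "X (h + y, f') = 0"
    proof (rule ccontr)
      assume "X (h + y, f') \<noteq> 0"
      hence "lt (h + y) f' = e" by (rule supp)
      hence "lt h (lt y f') = e" by simp
      hence "lt y f' = lt (- h) e" by (simp add: lt_eq_iff)
      also have "\<dots> = e" using h stab_neg unfolding stab_def by blast
      finally show False using False by simp
    qed
    ultimately show ?thesis by simp
  qed
  show "indc e b X" unfolding indc_def using supp rel by blast
next
  assume I: "indc e b X"
  have fin: "finite {b. X b \<noteq> 0}" by (rule indc_finite[OF I])
  have supp: "lt y f' = e" if "X (y, f') \<noteq> 0" for y f'
    using I that unfolding indc_def by blast
  have rel: "X (h + y, f') = b h * X (y, f')" if h: "h \<in> stab lt e" for h y f'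
    using I h unfolding indc_def by blast
  have "rho_id_coef lt e b X q = id_lam_coef lt e X q" for q
  proof -
    obtain h bb y f' where q: "q = ((h, bb), (y, f'))" by (metis prod.collapse)
    show ?thesis
    proof (cases "h \<in> stab lt e")
      case False thus ?thesis by (simp add: q rho_id_coef_def id_lam_formula[OF fin])
    next
      case h: True
      show ?thesis
      proof (cases "lt y f' = e")
        case True thus ?thesis using h rel[OF h, of y f']
          by (simp add: q rho_id_coef_def id_lam_formula[OF fin])
      next
        case False
        hence 0: "X (y, f') = 0" using supp by blast
        hence 1: "X (h + y, f') = 0" using rel[OF h] by simp
        have "rho_id_coef lt e b X q = 0" using 0 by (simp add: q rho_id_coef_def)
        moreover have "id_lam_coef lt e X q = 0" using 1 by (simp add: q id_lam_formula[OF fin])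
        ultimately show ?thesis by simp
      qed
    qed
  qed
  hence "rho_id_coef lt e b X = id_lam_coef lt e X" by (rule ext)
  thus "X \<in> induced lt e b" using fin unfolding induced_def by blast
qed

end

context mpt begin

lemma indc_zero: "indc e b vzero" by (simp add: indc_def vzero_def)
lemma indc_add: "indc e b X \<Longrightarrow> indc e b Y \<Longrightarrow> indc e b (vadd X Y)"
  unfolding indc_def vadd_def
proof (intro conjI allI ballI impI)
  fix y f'
  assume X: "(\<forall>y f'. X (y, f') \<noteq> 0 \<longrightarrow> lt y f' = e) \<and> (\<forall>h\<in>stab lt e. \<forall>y f'. X (h + y, f') = b h * X (y, f'))"
    and Y: "(\<forall>y f'. Y (y, f') \<noteq> 0 \<longrightarrow> lt y f' = e) \<and> (\<forall>h\<in>stab lt e. \<forall>y f'. Y (h + y, f') = b h * Y (y, f'))"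
  { assume "X (y, f') + Y (y, f') \<noteq> 0"
    hence "X (y, f') \<noteq> 0 \<or> Y (y, f') \<noteq> 0" by auto
    thus "lt y f' = e" using X Y by blast }
  { fix h assume "h \<in> stab lt e"
    thus "X (h + y, f') + Y (h + y, f') = b h * (X (y, f') + Y (y, f'))"
      using X Y by (simp add: distrib_left) }
qed
lemma indc_sc: "indc e b X \<Longrightarrow> indc e b (vsc c X)"
  unfolding indc_def vsc_def by (simp add: mult.left_commute)

lemma fin_add: "finite {p. X p \<noteq> (0::'k::field)} \<Longrightarrow> finite {p. Y p \<noteq> 0} \<Longrightarrow> finite {p. vadd X Y p \<noteq> 0}"
  by (rule finite_subset[of _ "{p. X p \<noteq> 0} \<union> {p. Y p \<noteq> 0}"]) (auto simp: vadd_def)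
lemma fin_sc: "finite {p. X p \<noteq> (0::'k::field)} \<Longrightarrow> finite {p. vsc c X p \<noteq> 0}"
  by (rule finite_subset[of _ "{p. X p \<noteq> 0}"]) (auto simp: vsc_def)

lemma indc_coact: assumes "indc e b X" shows "indc e b (ind_coact lt X b2)"
proof -
  obtain g2 f2 where b2: "b2 = (g2, f2)" by (cases b2)
  have F: "ind_coact lt X b2 = (\<lambda>(g1, f1). if f1 = lt g2 f2 then X (g1 + g2, f2) else 0)"
    unfolding b2 by (rule ind_coact_formula[OF indc_finite[OF assms]])
  have s: "lt y f' = e" if "X (y, f') \<noteq> 0" for y f' using assms that unfolding indc_def by blast
  have r: "X (h + y, f') = b h * X (y, f')" if "h \<in> stab lt e" for h y f' using assms that unfolding indc_def by blast
  show ?thesis unfolding F indc_def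
  proof (intro conjI allI ballI impI)
    fix y f' assume "(case (y, f') of (g1, f1) \<Rightarrow> if f1 = lt g2 f2 then X (g1 + g2, f2) else 0) \<noteq> 0"
    hence "f' = lt g2 f2" "X (y + g2, f2) \<noteq> 0" by (auto split: if_splits)
    thus "lt y f' = e" using s by simp
  next
    fix h y f' assume h: "h \<in> stab lt e"
    show "(case (h + y, f') of (g1, f1) \<Rightarrow> if f1 = lt g2 f2 then X (g1 + g2, f2) else 0) =
          b h * (case (y, f') of (g1, f1) \<Rightarrow> if f1 = lt g2 f2 then X (g1 + g2, f2) else 0)"
      using r[OF h, of "y + g2" f2] by (simp add: add.assoc)
  qed
qed

lemma coact_add: assumes "finite {p. X p \<noteq> 0}" "finite {p. Y p \<noteq> 0}"
  shows "ind_coact lt (vadd X Y) b2 = vadd (ind_coact lt X b2) (ind_coact lt Y b2)"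
proof -
  obtain g2 f2 where b2: "b2 = (g2, f2)" by (cases b2)
  show ?thesis unfolding b2 ind_coact_formula[OF assms(1)] ind_coact_formula[OF assms(2)]
      ind_coact_formula[OF fin_add[OF assms]]
    by (auto simp: vadd_def)
qed

lemma coact_sc: assumes "finite {p. X p \<noteq> 0}"
  shows "ind_coact lt (vsc c X) b2 = vsc c (ind_coact lt X b2)"
proof -
  obtain g2 f2 where b2: "b2 = (g2, f2)" by (cases b2)
  show ?thesis unfolding b2 ind_coact_formula[OF assms(1)] ind_coact_formula[OF fin_sc[OF assms]]
    by (auto simp: vsc_def)
qed

lemma coact_stab: assumes X: "indc e b X" and h: "h \<in> stab lt e" and f2: "lt h f2 = f2"
  shows "ind_coact lt X (h, f2) = vsc (b h) (ind_coact lt X (0, f2))"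
proof -
  have r: "X (h + y, f') = b h * X (y, f')" for y f' using X h unfolding indc_def by blast
  show ?thesis unfolding ind_coact_formula[OF indc_finite[OF X]]
    using f2 r by (auto simp: vsc_def add.commute)
qed

definition E :: "'f \<Rightarrow> ('g \<Rightarrow> 'k::field) \<Rightarrow> 'g \<Rightarrow> 'g \<times> 'f \<Rightarrow> 'k" where
  "E e b g = (\<lambda>(x, f'). if f' = lt (- x) e \<and> x - g \<in> stab lt e then b (x - g) else 0)"

lemma chr_mult: "chr e b \<Longrightarrow> h \<in> stab lt e \<Longrightarrow> x \<in> stab lt e \<Longrightarrow> b (h + x) = b h * b x"
  unfolding chr_def by blast
lemma chr0: "chr e b \<Longrightarrow> b 0 = 1" unfolding chr_def by blast
lemma chr_inv: "chr e b \<Longrightarrow> h \<in> stab lt e \<Longrightarrow> b h * b (- h) = 1"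
  using chr_mult[of e b h "- h"] chr0[of e b] by (simp add: stab_neg)

lemma stab_eq: assumes "g - g' \<in> stab lt e" shows "lt g e = lt g' e"
proof -
  have "lt g e = lt (g' + (g - g')) e" by simp
  also have "\<dots> = lt g' e" by (rule stab_move[OF assms])
  finally show ?thesis .
qed
lemma stab_cancel: "h \<in> stab lt e \<Longrightarrow> h + x \<in> stab lt e \<longleftrightarrow> x \<in> stab lt e"
proof
  assume "h \<in> stab lt e" "h + x \<in> stab lt e"
  hence "(h + x) - h \<in> stab lt e" by (rule stab_diff[rotated])
  thus "x \<in> stab lt e" by simp
qed (rule stab_add)
lemma stab_shift: "h \<in> stab lt e \<Longrightarrow> lt (- (h + x)) e = lt (- x) e"
  by (rule stab_eq) (simp add: algebra_simps)

lemma E_indc: assumes "chr e b" shows "indc e b (E e b g)"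
  unfolding indc_def
proof (intro conjI allI ballI impI)
  fix y f' assume "E e b g (y, f') \<noteq> 0"
  hence "f' = lt (- y) e" by (auto simp: E_def split: if_splits)
  thus "lt y f' = e" by simp
next
  fix h y f' assume h: "h \<in> stab lt e"
  have a: "h + y - g = h + (y - g)" by (simp add: algebra_simps)
  have st: "h + y - g \<in> stab lt e \<longleftrightarrow> y - g \<in> stab lt e"
    unfolding a by (rule stab_cancel[OF h])
  have l: "lt (- (h + y)) e = lt (- y) e" by (rule stab_shift[OF h])
  show "E e b g (h + y, f') = b h * E e b g (y, f')"
    unfolding E_def prod.case l st unfolding a using chr_mult[OF assms h, of "y - g"] by auto
qed

lemma E_shift: assumes "chr e b" "h \<in> stab lt e" shows "E e b (h + g) = vsc (b (- h)) (E e b g)"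
proof (rule ext, clarify)
  fix x f'
  have a: "x - (h + g) = - h + (x - g)" by (simp add: algebra_simps)
  have st: "x - (h + g) \<in> stab lt e \<longleftrightarrow> x - g \<in> stab lt e"
    unfolding a by (rule stab_cancel) (simp add: assms(2))
  show "E e b (h + g) (x, f') = vsc (b (- h)) (E e b g) (x, f')"
    unfolding E_def vsc_def prod.case st unfolding a using chr_mult[OF assms(1), of "- h" "x - g"] assms(2) by auto
qed

end

context mpt begin

lemma card_sub1: "card {g. x - g \<in> S} = card (S::'g set)"
proof -
  have "{g. x - g \<in> S} = (\<lambda>h. x - h) ` S" by (force simp: image_def)
  moreover have "inj_on (\<lambda>h. x - h) S" by (auto simp: inj_on_def)
  ultimately show ?thesis by (simp add: card_image)
qed
lemma card_sub2: "card {x. x - g \<in> S} = card (S::'g set)"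
proof -
  have "{x. x - g \<in> S} = (\<lambda>h. h + g) ` S" by (force simp: image_def)
  moreover have "inj_on (\<lambda>h. h + g) S" by (auto simp: inj_on_def)
  ultimately show ?thesis by (simp add: card_image)
qed

lemma decomp:
  assumes b: "chr e b" and X: "indc e b X"
  shows "of_nat (card (stab lt e)) * X p = (\<Sum>g\<in>UNIV. X (g, lt (- g) e) * E e b g p)"
proof -
  obtain x f' where p: "p = (x, f')" by (cases p)
  have s: "lt y f' = e" if "X (y, f') \<noteq> 0" for y f' using X that unfolding indc_def by blast
  have r: "X (h + y, f') = b h * X (y, f')" if "h \<in> stab lt e" for h y f' using X that unfolding indc_def by blast
  show ?thesis
  proof (cases "f' = lt (- x) e")
    case False
    hence "X (x, f') = 0" using s by (auto simp: lt_eq_iff)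
    thus ?thesis using False by (simp add: p E_def)
  next
    case True
    have t: "X (g, lt (- g) e) * E e b g p = (if x - g \<in> stab lt e then X (x, f') else 0)" for g
    proof (cases "x - g \<in> stab lt e")
      case h: True
      have l: "lt (- g) e = f'" unfolding True by (rule stab_eq) (simp add: h)
      have "X (x, f') = X ((x - g) + g, f')" by simp
      also have "\<dots> = b (x - g) * X (g, f')" by (rule r[OF h])
      finally show ?thesis using h True by (simp add: p E_def l mult.commute)
    qed (simp add: p E_def)
    have "(\<Sum>g\<in>UNIV. X (g, lt (- g) e) * E e b g p) = (\<Sum>g\<in>UNIV. if x - g \<in> stab lt e then X (x, f') else 0)"
      by (simp add: t)
    also have "\<dots> = of_nat (card {g. x - g \<in> stab lt e}) * X (x, f')"
      by (simp add: sum.If_cases Int_def)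
    finally show ?thesis by (simp add: card_sub1 p)
  qed
qed

lemma func_sum:
  fixes \<phi> :: "('x \<Rightarrow> 'k::field) \<Rightarrow> 'k"
  assumes \<phi>: "functional_on M \<phi>" and z: "vzero \<in> M" and ad: "\<forall>u\<in>M. \<forall>v\<in>M. vadd u v \<in> M"
    and sc: "\<forall>c. \<forall>u\<in>M. vsc c u \<in> M" and fin: "finite A" and u: "\<forall>g\<in>A. u g \<in> M"
  shows "(\<lambda>p. \<Sum>g\<in>A. c g * u g p) \<in> M \<and> \<phi> (\<lambda>p. \<Sum>g\<in>A. c g * u g p) = (\<Sum>g\<in>A. c g * \<phi> (u g))"
  using fin u
proof (induction A rule: finite_induct)
  case empty
  have "\<phi> vzero = \<phi> (vsc 0 vzero)" by (simp add: vsc_def vzero_def)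
  also have "\<dots> = 0" using \<phi> z unfolding functional_on_def by simp
  finally show ?case using z by (simp add: vzero_def[symmetric])
next
  case (insert x F)
  have eq: "(\<lambda>p. \<Sum>g\<in>insert x F. c g * u g p) = vadd (vsc (c x) (u x)) (\<lambda>p. \<Sum>g\<in>F. c g * u g p)"
    using insert by (simp add: vadd_def vsc_def)
  have m1: "vsc (c x) (u x) \<in> M" using sc insert by simp
  have m2: "(\<lambda>p. \<Sum>g\<in>F. c g * u g p) \<in> M" using insert by simp
  show ?case unfolding eq using ad m1 m2 \<phi> insert unfolding functional_on_def by simp
qed

end

context mpt begin

definition Tmap :: "'f \<Rightarrow> ('g \<Rightarrow> 'k::field) \<Rightarrow> (('g \<times> 'f \<Rightarrow> 'k) \<Rightarrow> 'k) \<Rightarrow> 'g \<times> 'f \<Rightarrow> 'k" where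
  "Tmap e a \<phi> = (\<lambda>(g, f'). if f' = lt (- g) (- e) then \<phi> (E e a g) else 0)"
definition Pmap :: "'f \<Rightarrow> ('g \<Rightarrow> 'k::field) \<Rightarrow> ('g \<times> 'f \<Rightarrow> 'k) \<Rightarrow> ('g \<times> 'f \<Rightarrow> 'k) \<Rightarrow> 'k" where
  "Pmap e a Y = (\<lambda>X. if X \<in> induced lt e a then
      (\<Sum>g\<in>UNIV. X (g, lt (- g) e) * Y (g, lt (- g) (- e))) / of_nat (card (stab lt e)) else 0)"

lemma ind_iff: "chr e b \<Longrightarrow> X \<in> induced lt e b \<longleftrightarrow> indc e b X"
  using induced_iff[of b X e] chr0[of e b] by blast

lemma chr_neg: assumes "chr e a" shows "chr (- e) (\<lambda>g. a (- g))"
  unfolding chr_def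
proof (intro conjI ballI)
  show "a (- 0) = 1" using chr0[OF assms] by simp
  fix h x assume "h \<in> stab lt (- e)" "x \<in> stab lt (- e)"
  hence "- h \<in> stab lt e" "- x \<in> stab lt e" by auto
  hence "a (- h + - x) = a (- h) * a (- x)" by (rule chr_mult[OF assms])
  moreover have "- (h + x) = - h + - x" by (simp add: algebra_simps)
  ultimately show "a (- (h + x)) = a (- h) * a (- x)" by simp
qed

lemma ind_closed: assumes "chr e a"
  shows "vzero \<in> induced lt e a" "\<And>u v. u \<in> induced lt e a \<Longrightarrow> v \<in> induced lt e a \<Longrightarrow> vadd u v \<in> induced lt e a"
    "\<And>c u. u \<in> induced lt e a \<Longrightarrow> vsc c u \<in> induced lt e a"
    "\<And>m b. m \<in> induced lt e a \<Longrightarrow> ind_coact lt m b \<in> induced lt e a"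
  using ind_iff[OF assms] indc_zero indc_add indc_sc indc_coact by auto

lemma n_nz: "of_nat (card (stab lt e)) \<noteq> (0::'k::field_char_0)"
proof -
  have "0 \<in> stab lt e" by simp
  hence "stab lt e \<noteq> {}" by blast
  hence "card (stab lt e) \<noteq> 0" by (simp add: card_eq_0_iff)
  thus ?thesis by simp
qed

lemma dual_zero: assumes "functional_on M \<phi>" "vzero \<in> M" shows "\<phi> vzero = 0"
proof -
  have "\<phi> vzero = \<phi> (vsc 0 vzero)" by (simp add: vsc_def vzero_def)
  also have "\<dots> = 0" using assms unfolding functional_on_def by simp
  finally show ?thesis .
qed

lemma Tmap_in: assumes a: "chr e a" and \<phi>: "\<phi> \<in> dual_space (induced lt e a)"
  shows "Tmap e a \<phi> \<in> induced lt (- e) (\<lambda>g. a (- g))"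
proof -
  have f: "functional_on (induced lt e a) \<phi>" using \<phi> by (simp add: dual_space_def)
  have EM: "E e a g \<in> induced lt e a" for g using ind_iff[OF a] E_indc[OF a] by simp
  have "indc (- e) (\<lambda>g. a (- g)) (Tmap e a \<phi>)"
    unfolding indc_def
  proof (intro conjI allI ballI impI)
    fix y f' assume "Tmap e a \<phi> (y, f') \<noteq> 0"
    hence "f' = lt (- y) (- e)" by (auto simp: Tmap_def split: if_splits)
    thus "lt y f' = - e" by (simp del: lt_neg)
  next
    fix h y f' assume h: "h \<in> stab lt (- e)"
    hence h': "h \<in> stab lt e" by simp
    have l: "lt (- (h + y)) (- e) = lt (- y) (- e)" by (rule stab_shift[OF h])
    have "\<phi> (E e a (h + y)) = a (- h) * \<phi> (E e a y)"
      unfolding E_shift[OF a h'] using f EM unfolding functional_on_def by blast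
    thus "Tmap e a \<phi> (h + y, f') = a (- h) * Tmap e a \<phi> (y, f')"
      unfolding Tmap_def prod.case l by simp
  qed
  thus ?thesis using ind_iff[OF chr_neg[OF a]] by simp
qed

lemma Pmap_in: assumes a: "chr e a"
  shows "Pmap e a Y \<in> dual_space (induced lt e a)"
proof -
  note cl = ind_closed[OF a]
  have "functional_on (induced lt e a) (Pmap e a Y)"
    unfolding functional_on_def Pmap_def
    using cl by (auto simp: vadd_def vsc_def sum.distrib distrib_right sum_distrib_left add_divide_distrib mult.assoc)
  thus ?thesis by (simp add: dual_space_def Pmap_def)
qed

lemma PT: assumes a: "chr e a" and \<phi>: "\<phi> \<in> dual_space (induced lt e a)"
  shows "Pmap e a (Tmap e a \<phi>) = (\<phi> :: ('g \<times> 'f \<Rightarrow> 'k::field_char_0) \<Rightarrow> 'k)"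
proof
  fix X
  have f: "functional_on (induced lt e a) \<phi>" and z: "\<forall>m. m \<notin> induced lt e a \<longrightarrow> \<phi> m = 0"
    using \<phi> by (auto simp: dual_space_def)
  note cl = ind_closed[OF a]
  have EM: "\<forall>g\<in>UNIV. E e a g \<in> induced lt e a" using ind_iff[OF a] E_indc[OF a] by simp
  show "Pmap e a (Tmap e a \<phi>) X = \<phi> X"
  proof (cases "X \<in> induced lt e a")
    case False thus ?thesis using z by (simp add: Pmap_def)
  next
    case True
    hence I: "indc e a X" using ind_iff[OF a] by simp
    let ?n = "of_nat (card (stab lt e)) :: 'k"
    have "(\<Sum>g\<in>UNIV. X (g, lt (- g) e) * \<phi> (E e a g)) = \<phi> (\<lambda>p. \<Sum>g\<in>UNIV. X (g, lt (- g) e) * E e a g p)"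
      using func_sum[OF f cl(1) _ _ finite_UNIV EM, of "\<lambda>g. X (g, lt (- g) e)"] cl(2,3) by simp
    also have "(\<lambda>p. \<Sum>g\<in>UNIV. X (g, lt (- g) e) * E e a g p) = vsc ?n X"
      using decomp[OF a I] by (auto simp: vsc_def)
    also have "\<phi> (vsc ?n X) = ?n * \<phi> X" using f True unfolding functional_on_def by blast
    finally show ?thesis using True n_nz[of e] by (simp add: Pmap_def Tmap_def)
  qed
qed

lemma TP: assumes a: "chr e a" and Y: "Y \<in> induced lt (- e) (\<lambda>g. a (- g))"
  shows "Tmap e a (Pmap e a Y) = (Y :: 'g \<times> 'f \<Rightarrow> 'k::field_char_0)"
proof (rule ext, clarify)
  fix g f'
  have I: "indc (- e) (\<lambda>g. a (- g)) Y" using Y ind_iff[OF chr_neg[OF a]] by simp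
  have s: "lt y f' = - e" if "Y (y, f') \<noteq> 0" for y f' using I that unfolding indc_def by blast
  have r: "Y (h + y, f') = a (- h) * Y (y, f')" if "h \<in> stab lt e" for h y f' using I that unfolding indc_def by simp
  have EM: "E e a g \<in> induced lt e a" using ind_iff[OF a] E_indc[OF a] by simp
  show "Tmap e a (Pmap e a Y) (g, f') = Y (g, f')"
  proof (cases "f' = lt (- g) (- e)")
    case False
    hence "Y (g, f') = 0" using s by (auto simp: lt_eq_iff simp del: lt_neg)
    thus ?thesis using False by (simp add: Tmap_def)
  next
    case True
    have t: "E e a g (x, lt (- x) e) * Y (x, lt (- x) (- e)) = (if x - g \<in> stab lt e then Y (g, f') else 0)" for x
    proof (cases "x - g \<in> stab lt e")
      case h: True
      have l: "lt (- x) (- e) = f'" unfolding True by (rule stab_eq) (use stab_neg[OF h] in \<open>simp add: algebra_simps\<close>)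
      have "Y (x, f') = Y ((x - g) + g, f')" by simp
      also have "\<dots> = a (- (x - g)) * Y (g, f')" by (rule r[OF h])
      finally have "E e a g (x, lt (- x) e) * Y (x, lt (- x) (- e)) = a (x - g) * a (- (x - g)) * Y (g, f')"
        using h by (simp add: E_def l del: lt_neg minus_diff_eq)
      thus ?thesis using chr_inv[OF a h] h by simp
    qed (simp add: E_def)
    have "(\<Sum>x\<in>UNIV. E e a g (x, lt (- x) e) * Y (x, lt (- x) (- e))) = (\<Sum>x\<in>UNIV. if x - g \<in> stab lt e then Y (g, f') else 0)"
      by (simp only: t)
    also have "\<dots> = of_nat (card {x. x - g \<in> stab lt e}) * Y (g, f')"
      by (simp add: sum.If_cases Int_def)
    finally have "(\<Sum>x\<in>UNIV. E e a g (x, lt (- x) e) * Y (x, lt (- x) (- e))) = of_nat (card (stab lt e)) * Y (g, f')"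
      by (simp add: card_sub2)
    thus ?thesis using True EM n_nz[of e] by (simp add: Tmap_def Pmap_def del: lt_neg)
  qed
qed

end

lemma comod_trans: assumes "comod_iso M c N d" "comod_iso N d P e" shows "comod_iso M c P e"
proof -
  obtain T where T: "linear_on M T" "bij_betw T M N" "\<forall>m\<in>M. \<forall>b. d (T m) b = T (c m b)"
    using assms(1) unfolding comod_iso_def by blast
  obtain U where U: "linear_on N U" "bij_betw U N P" "\<forall>m\<in>N. \<forall>b. e (U m) b = U (d m b)"
    using assms(2) unfolding comod_iso_def by blast
  have TM: "T m \<in> N" if "m \<in> M" for m using T(2) that by (auto simp: bij_betw_def)
  have "linear_on M (U \<circ> T)" using T(1) U(1) TM unfolding linear_on_def by (simp add: comp_def)
  moreover have "bij_betw (U \<circ> T) M P" using T(2) U(2) by (rule bij_betw_trans)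
  moreover have "\<forall>m\<in>M. \<forall>b. e ((U \<circ> T) m) b = (U \<circ> T) (c m b)" using T(3) U(3) TM by simp
  ultimately show ?thesis unfolding comod_iso_def by blast
qed

lemma comod_sym: assumes "comod_iso M c N d"
  and cl: "\<forall>u\<in>M. \<forall>v\<in>M. vadd u v \<in> M" "\<forall>k. \<forall>u\<in>M. vsc k u \<in> M" "\<forall>m\<in>M. \<forall>b. c m b \<in> M"
  shows "comod_iso N d M c"
proof -
  obtain T where T: "linear_on M T" "bij_betw T M N" "\<forall>m\<in>M. \<forall>b. d (T m) b = T (c m b)"
    using assms(1) unfolding comod_iso_def by blast
  define U where "U = inv_into M T"
  have U: "bij_betw U N M" unfolding U_def by (rule bij_betw_inv_into[OF T(2)])
  have UM: "U n \<in> M" if "n \<in> N" for n using U that by (auto simp: bij_betw_def)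
  have TU: "T (U n) = n" if "n \<in> N" for n using T(2) that unfolding U_def by (simp add: bij_betw_inv_into_right)
  have UT: "U (T m) = m" if "m \<in> M" for m using T(2) that unfolding U_def by (simp add: bij_betw_inv_into_left)
  have "linear_on N U" unfolding linear_on_def
  proof (intro conjI ballI allI)
    fix u v assume "u \<in> N" "v \<in> N"
    hence "T (vadd (U u) (U v)) = vadd u v" using T(1) UM TU unfolding linear_on_def by simp
    hence "U (vadd u v) = U (T (vadd (U u) (U v)))" by simp
    also have "\<dots> = vadd (U u) (U v)" using UT cl(1) UM \<open>u \<in> N\<close> \<open>v \<in> N\<close> by simp
    finally show "U (vadd u v) = vadd (U u) (U v)" .
  next
    fix k u assume "u \<in> N"
    hence "T (vsc k (U u)) = vsc k u" using T(1) UM TU unfolding linear_on_def by simp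
    hence "U (vsc k u) = U (T (vsc k (U u)))" by simp
    also have "\<dots> = vsc k (U u)" using UT cl(2) UM \<open>u \<in> N\<close> by simp
    finally show "U (vsc k u) = vsc k (U u)" .
  qed
  moreover have "\<forall>n\<in>N. \<forall>b. c (U n) b = U (d n b)"
  proof (intro ballI allI)
    fix n b assume n: "n \<in> N"
    have "d n b = T (c (U n) b)" using T(3) UM[OF n] TU[OF n] by metis
    thus "c (U n) b = U (d n b)" using UT cl(3) UM[OF n] by simp
  qed
  ultimately show ?thesis using U unfolding comod_iso_def by blast
qed

context mpt begin

lemma Tmap_linear: "linear_on M (Tmap e a)"
  unfolding linear_on_def Tmap_def by (auto simp: vadd_def vsc_def fun_eq_iff)

lemma dual_coact_simp:
  assumes triv: "\<forall>g h. rt g h = g" and f: "functional_on M \<phi>" and z: "vzero \<in> M" and m: "m \<in> M"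
  shows "dual_coact lt rt M c \<phi> (g2, f2) m = \<phi> (c m (- g2, - lt g2 f2))"
proof -
  let ?b0 = "(- g2, - lt g2 f2)"
  let ?S = "{b. antipode_idx lt rt b = (g2, f2) \<and> c m b \<noteq> vzero}"
  have sub: "?S \<subseteq> {?b0}"
  proof
    fix b assume "b \<in> ?S"
    then obtain g f0 where b: "b = (g, f0)" "(- g, - lt g f0) = (g2, f2)"
      using triv by (cases b) (auto simp: antipode_idx_def)
    hence "g = - g2" "lt (- g2) f0 = - f2" by auto
    hence "f0 = - lt g2 f2" by (simp add: lt_eq_iff)
    thus "b \<in> {?b0}" using b \<open>g = - g2\<close> by simp
  qed
  show ?thesis
  proof (cases "c m ?b0 = vzero")
    case True
    hence e: "?S = {}" using sub by auto
    have "dual_coact lt rt M c \<phi> (g2, f2) m = (\<Sum>b\<in>?S. \<phi> (c m b))" using m by (simp add: dual_coact_def)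
    thus ?thesis unfolding e using True dual_zero[OF f z] by simp
  next
    case False
    hence "?S = {?b0}" using sub triv by (auto simp: antipode_idx_def)
    thus ?thesis using m by (simp add: dual_coact_def)
  qed
qed

lemma E_coact: assumes a: "chr e a"
  shows "ind_coact lt (E e a g1) (- g2, - lt g2 f2) =
         (if - f2 = lt (- (g1 + g2)) e then E e a (g1 + g2) else vzero)"
proof (rule ext, clarify)
  fix x f1
  have fin: "finite {p. E e a g1 p \<noteq> 0}" by (rule indc_finite[OF E_indc[OF a]])
  have l1: "lt (- g2) (- lt g2 f2) = - f2" by simp
  have d: "x + - g2 - g1 = x - (g1 + g2)" by (simp add: algebra_simps)
  have L: "ind_coact lt (E e a g1) (- g2, - lt g2 f2) (x, f1) =
     (if f1 = - f2 then (if - lt g2 f2 = lt (- (x + - g2)) e \<and> x - (g1 + g2) \<in> stab lt e then a (x - (g1 + g2)) else 0) else 0)"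
    unfolding ind_coact_formula[OF fin] prod.case l1 by (simp only: E_def prod.case d)
  show "ind_coact lt (E e a g1) (- g2, - lt g2 f2) (x, f1) =
         (if - f2 = lt (- (g1 + g2)) e then E e a (g1 + g2) else vzero) (x, f1)"
  proof (cases "x - (g1 + g2) \<in> stab lt e")
    case False thus ?thesis unfolding L by (simp add: E_def vzero_def)
  next
    case st: True
    have q: "lt (- x) e = lt (- (g1 + g2)) e"
      by (rule stab_eq) (use stab_neg[OF st] in \<open>simp add: algebra_simps\<close>)
    have "lt (- (x + - g2)) e = lt g2 (lt (- x) e)" by (simp add: algebra_simps)
    hence c: "(- lt g2 f2 = lt (- (x + - g2)) e) \<longleftrightarrow> - f2 = lt (- (g1 + g2)) e"
      unfolding q by (metis lt_inj lt_neg)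
    have E2: "E e a (g1 + g2) (x, f1) = (if f1 = lt (- (g1 + g2)) e then a (x - (g1 + g2)) else 0)"
      using st unfolding q[symmetric] by (simp only: E_def prod.case) simp
    show ?thesis
    proof (cases "- f2 = lt (- (g1 + g2)) e")
      case True
      have "ind_coact lt (E e a g1) (- g2, - lt g2 f2) (x, f1) = (if f1 = - f2 then a (x - (g1 + g2)) else 0)"
        unfolding L c using True st by simp
      also have "\<dots> = E e a (g1 + g2) (x, f1)" unfolding E2 using True by simp
      also have "\<dots> = (if - f2 = lt (- (g1 + g2)) e then E e a (g1 + g2) else vzero) (x, f1)"
        using True by simp
      finally show ?thesis .
    next
      case False
      show ?thesis unfolding L c using False by (simp add: vzero_def)
    qed
  qed
qed

lemma compat:
  assumes triv: "\<forall>g h. rt g h = g" and a: "chr e a" and \<phi>: "\<phi> \<in> dual_space (induced lt e a)"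
  shows "ind_coact lt (Tmap e a \<phi>) b = Tmap e a (dual_coact lt rt (induced lt e a) (ind_coact lt) \<phi> b)"
proof -
  obtain g2 f2 where b: "b = (g2, f2)" by (cases b)
  have f: "functional_on (induced lt e a) \<phi>" using \<phi> by (simp add: dual_space_def)
  note cl = ind_closed[OF a]
  have fin: "finite {p. Tmap e a \<phi> p \<noteq> 0}"
    using indc_finite Tmap_in[OF a \<phi>] ind_iff[OF chr_neg[OF a]] by blast
  have EM: "E e a g \<in> induced lt e a" for g using ind_iff[OF a] E_indc[OF a] by simp
  show ?thesis
  proof (rule ext, clarify)
    fix g1 f1
    have R: "Tmap e a (dual_coact lt rt (induced lt e a) (ind_coact lt) \<phi> b) (g1, f1) =
      (if f1 = lt (- g1) (- e) \<and> - f2 = lt (- (g1 + g2)) e then \<phi> (E e a (g1 + g2)) else 0)"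
      unfolding b Tmap_def prod.case dual_coact_simp[OF triv f cl(1) EM] E_coact[OF a]
      using dual_zero[OF f cl(1)] by simp
    have Lf: "ind_coact lt (Tmap e a \<phi>) b (g1, f1) =
      (if f1 = lt g2 f2 \<and> f2 = lt (- (g1 + g2)) (- e) then \<phi> (E e a (g1 + g2)) else 0)"
      unfolding b ind_coact_formula[OF fin] by (simp add: Tmap_def del: lt_neg)
    have B: "f2 = lt (- (g1 + g2)) (- e) \<longleftrightarrow> - f2 = lt (- (g1 + g2)) e"
    proof
      assume "f2 = lt (- (g1 + g2)) (- e)" thus "- f2 = lt (- (g1 + g2)) e" by simp
    next
      assume "- f2 = lt (- (g1 + g2)) e"
      hence "- (- f2) = - lt (- (g1 + g2)) e" by (rule arg_cong)
      thus "f2 = lt (- (g1 + g2)) (- e)" by simp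
    qed
    have C: "f2 = lt (- (g1 + g2)) (- e) \<Longrightarrow> lt g2 f2 = lt (- g1) (- e)"
      by (simp add: algebra_simps del: lt_neg)
    show "ind_coact lt (Tmap e a \<phi>) b (g1, f1) =
        Tmap e a (dual_coact lt rt (induced lt e a) (ind_coact lt) \<phi> b) (g1, f1)"
      unfolding R Lf using B C by auto
  qed
qed

lemma part2:
  assumes triv: "\<forall>g h. rt g h = g" and a: "chr e (a :: 'g \<Rightarrow> 'k::field_char_0)"
  shows "comod_iso (dual_space (induced lt e a)) (dual_coact lt rt (induced lt e a) (ind_coact lt))
                   (induced lt (- e) (\<lambda>g. a (- g))) (ind_coact lt)"
  unfolding comod_iso_def
proof (intro exI conjI)
  show "linear_on (dual_space (induced lt e a)) (Tmap e a)" by (rule Tmap_linear)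
  show "bij_betw (Tmap e a) (dual_space (induced lt e a)) (induced lt (- e) (\<lambda>g. a (- g)))"
    by (rule bij_betw_byWitness[where f'="Pmap e a"])
       (use PT[OF a] TP[OF a] Tmap_in[OF a] Pmap_in[OF a] in auto)
  show "\<forall>m\<in>dual_space (induced lt e a). \<forall>b. ind_coact lt (Tmap e a m) b =
     Tmap e a (dual_coact lt rt (induced lt e a) (ind_coact lt) m b)"
    using compat[OF triv a] by blast
qed

lemma dual_closed:
  assumes triv: "\<forall>g h. rt g h = g" and a: "chr e a"
  shows "\<forall>u\<in>dual_space (induced lt e a). \<forall>v\<in>dual_space (induced lt e a). vadd u v \<in> dual_space (induced lt e a)"
    "\<forall>k. \<forall>u\<in>dual_space (induced lt e a). vsc k u \<in> dual_space (induced lt e a)"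
    "\<forall>m\<in>dual_space (induced lt e a). \<forall>b. dual_coact lt rt (induced lt e a) (ind_coact lt) m b \<in> dual_space (induced lt e a)"
proof -
  show "\<forall>u\<in>dual_space (induced lt e a). \<forall>v\<in>dual_space (induced lt e a). vadd u v \<in> dual_space (induced lt e a)"
    by (auto simp: dual_space_def functional_on_def vadd_def distrib_left)
  show "\<forall>k. \<forall>u\<in>dual_space (induced lt e a). vsc k u \<in> dual_space (induced lt e a)"
    by (auto simp: dual_space_def functional_on_def vsc_def mult.left_commute distrib_left)
  show "\<forall>m\<in>dual_space (induced lt e a). \<forall>b. dual_coact lt rt (induced lt e a) (ind_coact lt) m b \<in> dual_space (induced lt e a)"
  proof (intro ballI allI)
    fix \<phi> and b :: "'g \<times> 'f" assume \<phi>: "\<phi> \<in> dual_space (induced lt e a)"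
    obtain g2 f2 where b: "b = (g2, f2)" by (cases b)
    have f: "functional_on (induced lt e a) \<phi>" using \<phi> by (simp add: dual_space_def)
    note cl = ind_closed[OF a]
    have fin: "finite {p. m p \<noteq> 0}" if "m \<in> induced lt e a" for m
      using that ind_iff[OF a] indc_finite by blast
    have "functional_on (induced lt e a) (dual_coact lt rt (induced lt e a) (ind_coact lt) \<phi> b)"
      unfolding functional_on_def b
    proof (intro conjI ballI allI)
      fix u v assume u: "u \<in> induced lt e a" and v: "v \<in> induced lt e a"
      show "dual_coact lt rt (induced lt e a) (ind_coact lt) \<phi> (g2, f2) (vadd u v) =
        dual_coact lt rt (induced lt e a) (ind_coact lt) \<phi> (g2, f2) u + dual_coact lt rt (induced lt e a) (ind_coact lt) \<phi> (g2, f2) v"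
        unfolding dual_coact_simp[OF triv f cl(1) u] dual_coact_simp[OF triv f cl(1) v]
          dual_coact_simp[OF triv f cl(1) cl(2)[OF u v]] coact_add[OF fin[OF u] fin[OF v]]
        using f cl(4) u v unfolding functional_on_def by blast
    next
      fix k u assume u: "u \<in> induced lt e a"
      show "dual_coact lt rt (induced lt e a) (ind_coact lt) \<phi> (g2, f2) (vsc k u) =
        k * dual_coact lt rt (induced lt e a) (ind_coact lt) \<phi> (g2, f2) u"
        unfolding dual_coact_simp[OF triv f cl(1) u]
          dual_coact_simp[OF triv f cl(1) cl(3)[OF u]] coact_sc[OF fin[OF u]]
        using f cl(4) u unfolding functional_on_def by blast
    qed
    moreover have "\<forall>m. m \<notin> induced lt e a \<longrightarrow> dual_coact lt rt (induced lt e a) (ind_coact lt) \<phi> b m = 0"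
      by (simp add: dual_coact_def)
    ultimately show "dual_coact lt rt (induced lt e a) (ind_coact lt) \<phi> b \<in> dual_space (induced lt e a)"
      by (simp add: dual_space_def)
  qed
qed

end

lemma lin_zero: assumes "linear_on M T" "vzero \<in> M" shows "T vzero = vzero"
proof -
  have "T vzero = T (vsc 0 vzero)" by (simp add: vsc_def vzero_def)
  also have "\<dots> = vsc 0 (T vzero)" using assms unfolding linear_on_def by blast
  also have "\<dots> = vzero" by (simp add: vsc_def vzero_def)
  finally show ?thesis .
qed

lemma lin_nz: assumes "linear_on M T" "vzero \<in> M" "bij_betw T M N" "m \<in> M" "m \<noteq> vzero"
  shows "T m \<noteq> vzero"
proof
  assume "T m = vzero"
  hence "T m = T vzero" using lin_zero[OF assms(1,2)] by simp
  hence "m = vzero" using assms(3) assms(2,4) by (auto simp: bij_betw_def inj_on_def)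
  thus False using assms(5) by simp
qed

lemma vsc_cancel: assumes "vsc (c::'k::field) W = vsc d W" "W \<noteq> vzero" shows "c = d"
proof -
  obtain p where "W p \<noteq> 0" using assms(2) by (auto simp: vzero_def fun_eq_iff)
  moreover have "c * W p = d * W p" using assms(1) by (auto simp: vsc_def fun_eq_iff)
  ultimately show ?thesis by simp
qed

lemma one_dim:
  "comod_iso (UNIV :: (unit \<Rightarrow> 'k::field) set) (char_coact K a) UNIV (char_coact K a') \<longleftrightarrow> (\<forall>h\<in>K. a h = a' h)"
proof
  assume "comod_iso (UNIV :: (unit \<Rightarrow> 'k::field) set) (char_coact K a) UNIV (char_coact K a')"
  then obtain T where T: "linear_on (UNIV :: (unit \<Rightarrow> 'k) set) T" "bij_betw T UNIV (UNIV :: (unit \<Rightarrow> 'k) set)"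
    "\<forall>m. \<forall>b. char_coact K a' (T m) b = T (char_coact K a m b)"
    unfolding comod_iso_def by blast
  let ?m = "(\<lambda>_. 1) :: unit \<Rightarrow> 'k"
  have nz: "T ?m \<noteq> vzero" by (rule lin_nz[OF T(1) _ T(2)]) (auto simp: vzero_def fun_eq_iff)
  show "\<forall>h\<in>K. a h = a' h"
  proof
    fix h assume h: "h \<in> K"
    have "char_coact K a' (T ?m) h = T (char_coact K a ?m h)" using T(3) by blast
    hence "vsc (a' h) (T ?m) = T (vsc (a h) ?m)" using h by (simp add: char_coact_def)
    also have "\<dots> = vsc (a h) (T ?m)" using T(1) unfolding linear_on_def by blast
    finally show "a h = a' h" using vsc_cancel nz by metis
  qed
next
  assume A: "\<forall>h\<in>K. a h = a' h"
  show "comod_iso (UNIV :: (unit \<Rightarrow> 'k::field) set) (char_coact K a) UNIV (char_coact K a')"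
    unfolding comod_iso_def
    by (rule exI[of _ id]) (use A in \<open>auto simp: linear_on_def char_coact_def\<close>)
qed

context mpt begin

definition Sh :: "'g \<Rightarrow> ('g \<times> 'f \<Rightarrow> 'k) \<Rightarrow> 'g \<times> 'f \<Rightarrow> 'k" where
  "Sh g0 X = (\<lambda>(y, f'). X (y - g0, f'))"

lemma chr_lt: "chr e b \<Longrightarrow> chr (lt g0 e) b" unfolding chr_def stab_lt by blast

lemma sh_indc: assumes "indc e b (X :: 'g \<times> 'f \<Rightarrow> 'k::field)" shows "indc (lt g0 e) b (Sh g0 X)"
  unfolding indc_def stab_lt
proof (intro conjI allI ballI impI)
  fix y f' assume "Sh g0 X (y, f') \<noteq> 0"
  hence "lt (y - g0) f' = e" using assms unfolding indc_def Sh_def by auto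
  hence "lt g0 (lt (y - g0) f') = lt g0 e" by simp
  thus "lt y f' = lt g0 e" by simp
next
  fix h y f' assume h: "h \<in> stab lt e"
  have "X (h + (y - g0), f') = b h * X (y - g0, f')" using assms h unfolding indc_def by blast
  thus "Sh g0 X (h + y, f') = b h * Sh g0 X (y, f')" by (simp add: Sh_def algebra_simps)
qed

lemma sh_inv: "Sh (- g0) (Sh g0 X) = X" by (simp add: Sh_def)
lemma sh_inv2: "Sh g0 (Sh (- g0) X) = X" by (simp add: Sh_def)

lemma shift_iso: assumes b: "chr e (b :: 'g \<Rightarrow> 'k::field)"
  shows "comod_iso (induced lt e b) (ind_coact lt) (induced lt (lt g0 e) b) (ind_coact lt)"
  unfolding comod_iso_def
proof (intro exI conjI)
  have b': "chr (lt g0 e) b" by (rule chr_lt[OF b])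
  show "linear_on (induced lt e b) (Sh g0)" by (auto simp: linear_on_def Sh_def vadd_def vsc_def)
  have i1: "Sh g0 X \<in> induced lt (lt g0 e) b" if "X \<in> induced lt e b" for X
    using that sh_indc ind_iff[OF b] ind_iff[OF b'] by blast
  have i2: "Sh (- g0) X \<in> induced lt e b" if "X \<in> induced lt (lt g0 e) b" for X
    using that sh_indc[of "lt g0 e" b X "- g0"] ind_iff[OF b] ind_iff[OF b'] by simp
  show "bij_betw (Sh g0) (induced lt e b) (induced lt (lt g0 e) b)"
    by (rule bij_betw_byWitness[where f'="Sh (- g0)"]) (use i1 i2 sh_inv sh_inv2 in auto)
  show "\<forall>m\<in>induced lt e b. \<forall>bb. ind_coact lt (Sh g0 m) bb = Sh g0 (ind_coact lt m bb)"
  proof (intro ballI allI)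
    fix m and bb :: "'g \<times> 'f" assume m: "m \<in> induced lt e b"
    obtain g2 f2 where bb: "bb = (g2, f2)" by (cases bb)
    have f1: "finite {p. m p \<noteq> 0}" using m ind_iff[OF b] indc_finite by blast
    have f2: "finite {p. Sh g0 m p \<noteq> 0}" using i1[OF m] ind_iff[OF b'] indc_finite by blast
    show "ind_coact lt (Sh g0 m) bb = Sh g0 (ind_coact lt m bb)"
      unfolding bb ind_coact_formula[OF f1] ind_coact_formula[OF f2]
      by (auto simp: Sh_def fun_eq_iff algebra_simps)
  qed
qed

end

theorem proposition6p2:
  fixes lt :: "'g::{ab_group_add, finite} \<Rightarrow> 'f::group_add \<Rightarrow> 'f"
    and rt :: "'g \<Rightarrow> 'f \<Rightarrow> 'g"
    and f :: 'f
    and a :: "'g \<Rightarrow> 'k::field_char_0"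
  assumes alg_closed: "\<forall>p :: 'k poly. degree p > 0 \<longrightarrow> (\<exists>x. poly p x = 0)"
    and mp: "matched_pair lt rt"
    and triv: "\<forall>g h. rt g h = g"
    and V: "is_kK_comod (stab lt f) (UNIV :: (unit \<Rightarrow> 'k) set) (char_coact (stab lt f) a)"
  shows "stab lt (- f) = stab lt f
    \<and> comod_iso (dual_space (induced lt f a)) (dual_coact lt rt (induced lt f a) (ind_coact lt))
                (induced lt (- f) (\<lambda>g. a (- g))) (ind_coact lt)
    \<and> (comod_iso (induced lt f a) (ind_coact lt)
                 (dual_space (induced lt f a)) (dual_coact lt rt (induced lt f a) (ind_coact lt))
       \<longleftrightarrow> comod_iso (UNIV :: (unit \<Rightarrow> 'k) set) (char_coact (stab lt f) a)
                     (UNIV :: (unit \<Rightarrow> 'k) set) (char_coact (stab lt f) (\<lambda>g. a (- g)))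
           \<and> {g. lt g f = - f} \<noteq> {})"
proof -
  note mpc = mp[unfolded matched_pair_def]
  note L0 = conjunct1[OF mpc]
  note LA = conjunct1[OF conjunct2[OF mpc]]
  note LH = conjunct1[OF conjunct2[OF conjunct2[OF conjunct2[OF conjunct2[OF mpc]]]]]
  interpret mpt lt
  proof
    show "lt 0 x = x" for x by (rule L0[rule_format])
    show "lt (g + h) x = lt g (lt h x)" for g h x by (rule LA[rule_format])
    show "lt g (x + y) = lt g x + lt g y" for g x y
    proof -
      have "lt g (x + y) = lt g x + lt (rt g x) y" by (rule LH[rule_format])
      thus ?thesis using triv by simp
    qed
  qed
  let ?K = "stab lt f"
  let ?\<rho> = "char_coact ?K a"
  let ?m = "(\<lambda>_. 1) :: unit \<Rightarrow> 'k"
  note Vu = V[unfolded is_kK_comod_def]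
  note Vc7 = conjunct2[OF conjunct2[OF conjunct2[OF conjunct2[OF conjunct2[OF conjunct2[OF Vu]]]]]]
  note Vc1 = conjunct1[OF Vc7] and Vc2 = conjunct2[OF Vc7]
  have Vc: "\<forall>m\<in>UNIV. \<forall>h\<in>?K. \<forall>x\<in>?K. ?\<rho> (?\<rho> m x) h = ?\<rho> m (h + x)" "\<forall>m\<in>UNIV. ?\<rho> m 0 = m"
    by (rule Vc1, rule Vc2)
  have a0: "a 0 = 1"
  proof -
    have "?\<rho> ?m 0 = ?m" using Vc(2) by blast
    hence "?\<rho> ?m 0 () = ?m ()" by (rule fun_cong)
    thus ?thesis by (simp add: char_coact_def vsc_def)
  qed
  have amul: "a (h + x) = a h * a x" if "h \<in> ?K" "x \<in> ?K" for h x
  proof -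
    have "?\<rho> (?\<rho> ?m x) h = ?\<rho> ?m (h + x)" using Vc(1) that by blast
    hence "?\<rho> (?\<rho> ?m x) h () = ?\<rho> ?m (h + x) ()" by (rule fun_cong)
    thus ?thesis using that stab_add[OF that] by (simp add: char_coact_def vsc_def)
  qed
  have a: "chr f a" unfolding chr_def using a0 amul by blast
  let ?M = "induced lt f a" and ?N = "induced lt (- f) (\<lambda>g. a (- g))"
  let ?Ms = "dual_space ?M" and ?dc = "dual_coact lt rt ?M (ind_coact lt)"
  have P2: "comod_iso ?Ms ?dc ?N (ind_coact lt)" by (rule part2[OF triv a])
  have an: "chr (- f) (\<lambda>g. a (- g))" by (rule chr_neg[OF a])
  have P3: "comod_iso ?M (ind_coact lt) ?Ms ?dc \<longleftrightarrow>
      comod_iso (UNIV :: (unit \<Rightarrow> 'k) set) ?\<rho> UNIV (char_coact ?K (\<lambda>g. a (- g))) \<and> {g. lt g f = - f} \<noteq> {}"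
  proof
    assume "comod_iso ?M (ind_coact lt) ?Ms ?dc"
    hence "comod_iso ?M (ind_coact lt) ?N (ind_coact lt)" using P2 by (rule comod_trans)
    then obtain U where U: "linear_on ?M U" "bij_betw U ?M ?N" "\<forall>m\<in>?M. \<forall>b. ind_coact lt (U m) b = U (ind_coact lt m b)"
      unfolding comod_iso_def by blast
    note cl = ind_closed[OF a]
    let ?m0 = "E f a 0"
    have m0: "?m0 \<in> ?M" using ind_iff[OF a] E_indc[OF a] by simp
    have m0i: "indc f a ?m0" by (rule E_indc[OF a])
    let ?P = "ind_coact lt ?m0 (0, f)"
    have P: "?P \<in> ?M" by (rule cl(4)[OF m0])
    have "?P (0, f) = 1"
      unfolding ind_coact_formula[OF indc_finite[OF m0i]] by (simp add: E_def a0)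
    hence Pnz: "?P \<noteq> vzero"
    proof (intro notI)
      assume 1: "?P (0, f) = 1" and "?P = vzero"
      hence "?P (0, f) = vzero (0::'g, f)" by simp
      also have "\<dots> = (0::'k)" by (simp add: vzero_def)
      finally show False using 1 by simp
    qed
    have W: "U ?P \<noteq> vzero" by (rule lin_nz[OF U(1) cl(1) U(2) P Pnz])
    let ?Y = "U ?m0"
    have Y: "?Y \<in> ?N" using U(2) m0 by (auto simp: bij_betw_def)
    have Yi: "indc (- f) (\<lambda>g. a (- g)) ?Y" using Y ind_iff[OF an] by simp
    have YP: "ind_coact lt ?Y (0, f) = U ?P" using U(3) m0 by blast
    obtain p where "ind_coact lt ?Y (0, f) p \<noteq> 0" using W YP by (auto simp: vzero_def fun_eq_iff)
    then obtain g1 where "?Y (g1, f) \<noteq> 0"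
      unfolding ind_coact_formula[OF indc_finite[OF Yi]] by (cases p) (auto split: if_splits)
    hence "lt g1 f = - f" using Yi unfolding indc_def by blast
    hence ne: "{g. lt g f = - f} \<noteq> {}" by blast
    have "\<forall>h\<in>?K. a h = a (- h)"
    proof
      fix h assume h: "h \<in> ?K"
      hence hf: "lt h f = f" by (simp add: stab_def)
      have "U (ind_coact lt ?m0 (h, f)) = U (vsc (a h) ?P)" using coact_stab[OF m0i h hf] by simp
      also have "\<dots> = vsc (a h) (U ?P)" using U(1) P unfolding linear_on_def by blast
      finally have 1: "U (ind_coact lt ?m0 (h, f)) = vsc (a h) (U ?P)" .
      have h': "h \<in> stab lt (- f)" using h by simp
      have "U (ind_coact lt ?m0 (h, f)) = ind_coact lt ?Y (h, f)" using U(3) m0 by simp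
      also have "\<dots> = vsc (a (- h)) (ind_coact lt ?Y (0, f))" by (rule coact_stab[OF Yi h' hf])
      finally have "vsc (a h) (U ?P) = vsc (a (- h)) (U ?P)" using 1 YP by simp
      thus "a h = a (- h)" using W by (rule vsc_cancel)
    qed
    hence "comod_iso (UNIV :: (unit \<Rightarrow> 'k) set) ?\<rho> UNIV (char_coact ?K (\<lambda>g. a (- g)))"
      by (rule iffD2[OF one_dim])
    thus "comod_iso (UNIV :: (unit \<Rightarrow> 'k) set) ?\<rho> UNIV (char_coact ?K (\<lambda>g. a (- g))) \<and> {g. lt g f = - f} \<noteq> {}"
      using ne by (rule conjI)
  next
    assume A: "comod_iso (UNIV :: (unit \<Rightarrow> 'k) set) ?\<rho> UNIV (char_coact ?K (\<lambda>g. a (- g))) \<and> {g. lt g f = - f} \<noteq> {}"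
    have ah: "\<forall>h\<in>?K. a h = a (- h)" by (rule iffD1[OF one_dim conjunct1[OF A]])
    obtain g0 where g0: "lt g0 f = - f" using A by blast
    have ah': "a (- h) = a h" if "h \<in> stab lt (- f)" for h using bspec[OF ah, of h] that by simp
    have IE: "indc (- f) (\<lambda>g. a (- g)) X \<longleftrightarrow> indc (- f) a X" for X
      unfolding indc_def using ah' by simp
    have NN: "?N = induced lt (- f) a"
    proof (rule set_eqI)
      fix X
      have "X \<in> ?N \<longleftrightarrow> indc (- f) (\<lambda>g. a (- g)) X" by (rule ind_iff[OF an])
      also have "\<dots> \<longleftrightarrow> indc (- f) a X" by (rule IE)
      also have "\<dots> \<longleftrightarrow> X \<in> induced lt (- f) a" using ind_iff[OF chr_lt[OF a, of g0]] g0 by simp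
      finally show "X \<in> ?N \<longleftrightarrow> X \<in> induced lt (- f) a" .
    qed
    have S1: "comod_iso ?M (ind_coact lt) ?N (ind_coact lt)"
      using shift_iso[OF a, of g0] unfolding NN g0 .
    have S2: "comod_iso ?N (ind_coact lt) ?Ms ?dc"
      by (rule comod_sym[OF P2 dual_closed[OF triv a]])
    show "comod_iso ?M (ind_coact lt) ?Ms ?dc" by (rule comod_trans[OF S1 S2])
  qed
  show ?thesis using P2 P3 by simp
qed

end
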